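(* Let $Q$ be a Boolean conjunctive query without self-joins and $I$ an instance. Then there exists a purified instance $I^p\subseteq I$ such that $\mathcal M_Q(I)=\mathcal M_Q(I^p)$. In particular $I\vDash Q$ iff $I^p\vDash Q$.
   Context: Relations carry keys and are of consistent or inconsistent type; a key-group is the set of tuples of a relation with a given key value; a repair of $I$ is a maximal subset of $I$ satisfying all key constraints (one tuple per key-group); $I\vDash Q$ means $Q(r)$ holds for every repair $r$. The full query $Q^f$ has the body of $Q$ with all variables free, so $Q^f(r)$ is the set of satisfying valuations (tuples indexed by the variables of $Q$). A repair $r$ is frugal for $Q$ if no repair $r'$ of $I$ satisfies $Q^f(r')\subsetneq Q^f(r)$. $\mathcal M_Q(I)=\{Q^f(r): r \text{ a frugal repair of } I \text{ for } Q\}$. An instance $I$ is purified (for $Q$) if for every relation $R$ occurring in $Q$, $\Pi_{attr(R)}(Q^f(I))=R^I$, where $\Pi_{attr(R)}$ projects onto the variables in the atom of $R$ (so every tuple of $I$ participates in some answer of $Q^f$ on $I$). *)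

theory Defs
  imports Main
begin

type_synonym ('r, 'v) fact = "'r \<times> 'v list"
type_synonym ('r, 'x) atom = "'r \<times> 'x list"

definition key_equal :: "('r \<Rightarrow> nat) \<Rightarrow> ('r, 'v) fact \<Rightarrow> ('r, 'v) fact \<Rightarrow> bool" where
  "key_equal kl f g \<longleftrightarrow> fst f = fst g \<and> take (kl (fst f)) (snd f) = take (kl (fst g)) (snd g)"

definition satisfies_keys :: "('r \<Rightarrow> nat) \<Rightarrow> ('r, 'v) fact set \<Rightarrow> bool" where
  "satisfies_keys kl r \<longleftrightarrow> (\<forall>f\<in>r. \<forall>g\<in>r. key_equal kl f g \<longrightarrow> f = g)"

definition is_repair :: "('r \<Rightarrow> nat) \<Rightarrow> ('r, 'v) fact set \<Rightarrow> ('r, 'v) fact set \<Rightarrow> bool" where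
  "is_repair kl I r \<longleftrightarrow> r \<subseteq> I \<and> satisfies_keys kl r \<and>
     (\<forall>r'. r \<subseteq> r' \<and> r' \<subseteq> I \<and> satisfies_keys kl r' \<longrightarrow> r' = r)"

definition qvars :: "('r, 'x) atom set \<Rightarrow> 'x set" where
  "qvars Q = (\<Union>a\<in>Q. set (snd a))"

definition full_query :: "('r, 'x) atom set \<Rightarrow> ('r, 'v) fact set \<Rightarrow> ('x \<Rightarrow> 'v) set" where
  "full_query Q r = {\<theta>. (\<forall>x. x \<notin> qvars Q \<longrightarrow> \<theta> x = undefined) \<and>
                       (\<forall>a\<in>Q. (fst a, map \<theta> (snd a)) \<in> r)}"

definition query_holds :: "('r, 'x) atom set \<Rightarrow> ('r, 'v) fact set \<Rightarrow> bool" where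
  "query_holds Q r \<longleftrightarrow> full_query Q r \<noteq> {}"

definition certain :: "('r \<Rightarrow> nat) \<Rightarrow> ('r, 'x) atom set \<Rightarrow> ('r, 'v) fact set \<Rightarrow> bool" where
  "certain kl Q I \<longleftrightarrow> (\<forall>r. is_repair kl I r \<longrightarrow> query_holds Q r)"

definition frugal :: "('r \<Rightarrow> nat) \<Rightarrow> ('r, 'x) atom set \<Rightarrow> ('r, 'v) fact set \<Rightarrow> ('r, 'v) fact set \<Rightarrow> bool" where
  "frugal kl Q I r \<longleftrightarrow> is_repair kl I r \<and>
     \<not> (\<exists>r'. is_repair kl I r' \<and> full_query Q r' \<subset> full_query Q r)"

definition MQ :: "('r \<Rightarrow> nat) \<Rightarrow> ('r, 'x) atom set \<Rightarrow> ('r, 'v) fact set \<Rightarrow> ('x \<Rightarrow> 'v) set set" where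
  "MQ kl Q I = {full_query Q r | r. frugal kl Q I r}"

definition purified :: "('r, 'x) atom set \<Rightarrow> ('r, 'v) fact set \<Rightarrow> bool" where
  "purified Q I \<longleftrightarrow> (\<forall>a\<in>Q. (\<lambda>\<theta>. (fst a, map \<theta> (snd a))) ` full_query Q I = {f\<in>I. fst f = fst a})"

definition sjf_bcq :: "('r \<Rightarrow> nat) \<Rightarrow> ('r, 'x) atom set \<Rightarrow> bool" where
  "sjf_bcq arity Q \<longleftrightarrow> finite Q \<and> inj_on fst Q \<and> (\<forall>a\<in>Q. length (snd a) = arity (fst a))"

definition wf_schema :: "('r \<Rightarrow> nat) \<Rightarrow> ('r \<Rightarrow> nat) \<Rightarrow> bool" where
  "wf_schema arity kl \<longleftrightarrow> (\<forall>R. kl R \<le> arity R)"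

definition wf_instance :: "('r \<Rightarrow> nat) \<Rightarrow> ('r \<Rightarrow> nat) \<Rightarrow> ('r \<Rightarrow> bool) \<Rightarrow> ('r, 'v) fact set \<Rightarrow> bool" where
  "wf_instance arity kl cons I \<longleftrightarrow> finite I \<and> (\<forall>f\<in>I. length (snd f) = arity (fst f)) \<and>
     (\<forall>f\<in>I. \<forall>g\<in>I. cons (fst f) \<and> key_equal kl f g \<longrightarrow> f = g)"

end

theory Submission
  imports Defs
begin

lemma ke_sym: "key_equal kl f g \<Longrightarrow> key_equal kl g f"
  unfolding key_equal_def by auto
lemma ke_trans: "key_equal kl f g \<Longrightarrow> key_equal kl g h \<Longrightarrow> key_equal kl f h"
  unfolding key_equal_def by auto
lemma ke_refl: "key_equal kl f f"
  unfolding key_equal_def by auto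

lemma sk_sub: "satisfies_keys kl s \<Longrightarrow> r \<subseteq> s \<Longrightarrow> satisfies_keys kl r"
  unfolding satisfies_keys_def by blast

lemma fq_mono: "r \<subseteq> s \<Longrightarrow> full_query Q r \<subseteq> full_query Q s"
  unfolding full_query_def by blast

definition qf_set where
  "qf_set kl Q J = {full_query Q r | r. is_repair kl J r}"

lemma MQ_alt: "MQ kl Q J = {s \<in> qf_set kl Q J. \<not>(\<exists>t\<in>qf_set kl Q J. t \<subset> s)}"
proof (intro set_eqI iffI)
  fix s assume "s \<in> MQ kl Q J"
  then obtain r where r: "s = full_query Q r" "is_repair kl J r"
    "\<And>r'. is_repair kl J r' \<Longrightarrow> \<not> full_query Q r' \<subset> full_query Q r"
    unfolding MQ_def frugal_def by auto
  have "s \<in> qf_set kl Q J" using r unfolding qf_set_def by auto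
  moreover have "\<not>(\<exists>t\<in>qf_set kl Q J. t \<subset> s)"
  proof
    assume "\<exists>t\<in>qf_set kl Q J. t \<subset> s"
    then obtain t where "t \<in> qf_set kl Q J" "t \<subset> s" by auto
    then obtain r' where "t = full_query Q r'" "is_repair kl J r'" unfolding qf_set_def by auto
    then show False using r \<open>t \<subset> s\<close> by auto
  qed
  ultimately show "s \<in> {s \<in> qf_set kl Q J. \<not>(\<exists>t\<in>qf_set kl Q J. t \<subset> s)}" by simp
next
  fix s assume "s \<in> {s \<in> qf_set kl Q J. \<not>(\<exists>t\<in>qf_set kl Q J. t \<subset> s)}"
  then have s1: "s \<in> qf_set kl Q J" and s2: "\<And>t. t \<in> qf_set kl Q J \<Longrightarrow> \<not> t \<subset> s" by auto
  obtain r where r: "s = full_query Q r" "is_repair kl J r" using s1 unfolding qf_set_def by auto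
  have "\<not> full_query Q r' \<subset> full_query Q r" if "is_repair kl J r'" for r'
    using s2[of "full_query Q r'"] that r(1) unfolding qf_set_def by auto
  then have "frugal kl Q I r" if "I = J" for I using r that unfolding frugal_def by auto
  then show "s \<in> MQ kl Q J" using r unfolding MQ_def by auto
qed

lemma min_eq:
  assumes "S' \<subseteq> S" "\<And>s. s\<in>S \<Longrightarrow> \<exists>t\<in>S'. t \<subseteq> s"
  shows "{s\<in>S. \<not>(\<exists>t\<in>S. t\<subset>s)} = {s\<in>S'. \<not>(\<exists>t\<in>S'. t\<subset>s)}"
proof (intro set_eqI iffI)
  fix s assume "s \<in> {s\<in>S. \<not>(\<exists>t\<in>S. t\<subset>s)}"
  then have sS: "s \<in> S" and sm: "\<And>t. t \<in> S \<Longrightarrow> \<not> t \<subset> s" by auto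
  obtain t where t: "t \<in> S'" "t \<subseteq> s" using assms(2)[OF sS] by auto
  have "t \<in> S" using t(1) assms(1) by auto
  then have "\<not> t \<subset> s" by (rule sm)
  then have "t = s" using t(2) by auto
  then have "s \<in> S'" using t(1) by simp
  moreover have "\<not> u \<subset> s" if "u \<in> S'" for u using sm that assms(1) by auto
  ultimately show "s \<in> {s\<in>S'. \<not>(\<exists>t\<in>S'. t\<subset>s)}" by auto
next
  fix s assume "s \<in> {s\<in>S'. \<not>(\<exists>t\<in>S'. t\<subset>s)}"
  then have sS: "s \<in> S'" and sm: "\<And>t. t \<in> S' \<Longrightarrow> \<not> t \<subset> s" by auto
  have "\<not> t \<subset> s" if tS: "t \<in> S" for t
  proof
    assume ts: "t \<subset> s"
    obtain u where u: "u \<in> S'" "u \<subseteq> t" using assms(2)[OF tS] by auto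
    have "u \<subset> s" using u(2) ts by auto
    then show False using sm u(1) by auto
  qed
  then show "s \<in> {s\<in>S. \<not>(\<exists>t\<in>S. t\<subset>s)}" using sS assms(1) by auto
qed

lemma certain_MQ: "certain kl Q J \<longleftrightarrow> {} \<notin> MQ kl Q J"
  unfolding certain_def MQ_def frugal_def query_holds_def by blast

lemma step:
  fixes kl :: "'r \<Rightarrow> nat" and Q :: "('r, 'x) atom set" and J :: "('r, 'v) fact set"
  assumes inj: "inj_on fst Q" and g: "g \<in> J" "a \<in> Q" "fst g = fst a"
   and np: "g \<notin> (\<lambda>\<theta>. (fst a, map \<theta> (snd a))) ` full_query Q J"
  defines "B \<equiv> {f\<in>J. key_equal kl f g}"
  shows "MQ kl Q J = MQ kl Q (J - B)"
proof -
  have gB: "g \<in> B" using g ke_refl unfolding B_def by blast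
  have nouse: "(fst b, map \<theta> (snd b)) \<noteq> g" if "\<theta> \<in> full_query Q J" "b \<in> Q" for \<theta> b
  proof
    assume e: "(fst b, map \<theta> (snd b)) = g"
    then have "fst b = fst a" using g by auto
    then have "b = a" using inj g(2) that(2) by (meson inj_onD)
    then show False using np e that(1) by blast
  qed
  have A: "is_repair kl J (insert g r') \<and> full_query Q (insert g r') = full_query Q r'"
    if r': "is_repair kl (J-B) r'" for r'
  proof
    have r'1: "r' \<subseteq> J - B" "satisfies_keys kl r'"
      and r'3: "\<And>r''. r' \<subseteq> r'' \<Longrightarrow> r'' \<subseteq> J - B \<Longrightarrow> satisfies_keys kl r'' \<Longrightarrow> r'' = r'"
      using r' unfolding is_repair_def by blast+
    have skg: "satisfies_keys kl (insert g r')"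
      unfolding satisfies_keys_def
    proof (intro ballI impI)
      fix f h assume f: "f \<in> insert g r'" and h: "h \<in> insert g r'" and k: "key_equal kl f h"
      show "f = h"
      proof (cases "f = g")
        case True
        then show ?thesis using h k r'1 ke_sym[of kl g h] unfolding B_def by auto
      next
        case False
        then have "f \<in> r'" using f by auto
        then show ?thesis using h k r'1 unfolding B_def satisfies_keys_def by auto
      qed
    qed
    show "is_repair kl J (insert g r')"
      unfolding is_repair_def
    proof (intro conjI allI impI)
      show "insert g r' \<subseteq> J" using g r'1 by auto
      show "satisfies_keys kl (insert g r')" by (rule skg)
      fix r'' assume h: "insert g r' \<subseteq> r'' \<and> r'' \<subseteq> J \<and> satisfies_keys kl r''"
      have "r'' - B = r'"
        using r'3[of "r'' - B"] h r'1 sk_sub[of kl r'' "r'' - B"] by blast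
      moreover have "r'' \<inter> B \<subseteq> {g}"
      proof
        fix x assume "x \<in> r'' \<inter> B"
        then show "x \<in> {g}" using h B_def unfolding satisfies_keys_def by auto
      qed
      ultimately show "r'' = insert g r'" using h gB by blast
    qed
    show "full_query Q (insert g r') = full_query Q r'"
    proof
      show "full_query Q r' \<subseteq> full_query Q (insert g r')" by (rule fq_mono) auto
      show "full_query Q (insert g r') \<subseteq> full_query Q r'"
      proof
        fix \<theta> assume th: "\<theta> \<in> full_query Q (insert g r')"
        have thJ: "\<theta> \<in> full_query Q J"
          using fq_mono[of "insert g r'" J Q] th g r'1 by auto
        show "\<theta> \<in> full_query Q r'"
          using th nouse[OF thJ] unfolding full_query_def by auto
      qed
    qed
  qed
  have Bp: "is_repair kl (J-B) (r - B)" if r: "is_repair kl J r" for r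
    unfolding is_repair_def
  proof (intro conjI allI impI)
    have r1: "r \<subseteq> J" "satisfies_keys kl r"
      and r3: "\<And>r''. r \<subseteq> r'' \<Longrightarrow> r'' \<subseteq> J \<Longrightarrow> satisfies_keys kl r'' \<Longrightarrow> r'' = r"
      using r unfolding is_repair_def by blast+
    show "r - B \<subseteq> J - B" using r1 by auto
    show "satisfies_keys kl (r - B)" using sk_sub r1 by blast
    fix r'' assume h: "r - B \<subseteq> r'' \<and> r'' \<subseteq> J - B \<and> satisfies_keys kl r''"
    have sk: "satisfies_keys kl (r'' \<union> (r \<inter> B))"
      unfolding satisfies_keys_def
    proof (intro ballI impI)
      fix f k assume f: "f \<in> r'' \<union> (r \<inter> B)" and k': "k \<in> r'' \<union> (r \<inter> B)" and e: "key_equal kl f k"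
      show "f = k"
      proof (cases "f \<in> r''")
        case True
        show ?thesis
        proof (cases "k \<in> r''")
          case True
          then show ?thesis using \<open>f \<in> r''\<close> h e unfolding satisfies_keys_def by blast
        next
          case False
          then have "k \<in> B" using k' by auto
          then have "key_equal kl f g" using e B_def ke_trans by blast
          then have "f \<in> B" using True h B_def by auto
          then show ?thesis using True h by auto
        qed
      next
        case False
        then have fB: "f \<in> r \<inter> B" using f by auto
        show ?thesis
        proof (cases "k \<in> r''")
          case True
          have "key_equal kl k g" using fB e B_def ke_trans ke_sym by blast
          then have "k \<in> B" using True h B_def by auto
          then show ?thesis using True h by auto
        next
          case False
          then have "k \<in> r" using k' by auto
          then show ?thesis using fB e r1 unfolding satisfies_keys_def by blast
        qed
      qed
    qed
    have "r'' \<union> (r \<inter> B) = r"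
      using r3[of "r'' \<union> (r \<inter> B)"] h sk r1 by blast
    then show "r'' = r - B" using h by blast
  qed
  have sub: "qf_set kl Q (J - B) \<subseteq> qf_set kl Q J"
    unfolding qf_set_def
  proof
    fix s assume "s \<in> {full_query Q r |r. is_repair kl (J - B) r}"
    then obtain r where "s = full_query Q r" "is_repair kl (J - B) r" by blast
    then show "s \<in> {full_query Q r |r. is_repair kl J r}" using A[of r] by auto
  qed
  have dom: "\<exists>t\<in>qf_set kl Q (J - B). t \<subseteq> s" if "s \<in> qf_set kl Q J" for s
    using that unfolding qf_set_def
  proof -
    assume "s \<in> {full_query Q r |r. is_repair kl J r}"
    then obtain r where "s = full_query Q r" "is_repair kl J r" by blast
    then show "\<exists>t\<in>{full_query Q r |r. is_repair kl (J - B) r}. t \<subseteq> s"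
      using Bp[of r] fq_mono[of "r - B" r Q] by blast
  qed
  show ?thesis unfolding MQ_alt using min_eq[OF sub dom] by simp
qed

lemma main:
  assumes inj: "inj_on fst Q"
  shows "finite J \<Longrightarrow> \<exists>Ip\<subseteq>J. purified Q Ip \<and> MQ kl Q J = MQ kl Q Ip"
proof (induction "card J" arbitrary: J rule: less_induct)
  case (less J)
  show ?case
  proof (cases "purified Q J")
    case True
    then show ?thesis by blast
  next
    case False
    have sub: "(\<lambda>\<theta>. (fst a, map \<theta> (snd a))) ` full_query Q J \<subseteq> {f\<in>J. fst f = fst a}" if "a \<in> Q" for a
      using that unfolding full_query_def by auto
    from False obtain a where a: "a \<in> Q"
      and ne: "(\<lambda>\<theta>. (fst a, map \<theta> (snd a))) ` full_query Q J \<noteq> {f\<in>J. fst f = fst a}"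
      unfolding purified_def by blast
    obtain g where g1: "g \<in> {f\<in>J. fst f = fst a}"
      and g2: "g \<notin> (\<lambda>\<theta>. (fst a, map \<theta> (snd a))) ` full_query Q J"
      using sub[OF a] ne by blast
    have ag: "a \<in> Q" "g \<in> J" "fst g = fst a"
      "g \<notin> (\<lambda>\<theta>. (fst a, map \<theta> (snd a))) ` full_query Q J"
      using a g1 g2 by auto
    define B where "B = {f\<in>J. key_equal kl f g}"
    have e: "MQ kl Q J = MQ kl Q (J - B)"
      unfolding B_def by (rule step[OF inj ag(2) ag(1) ag(3) ag(4)])
    have gB: "g \<in> B" using ag(2) ke_refl[of kl g] unfolding B_def by simp
    have ps: "J - B \<subset> J" using gB ag(2) by blast
    have lt: "card (J - B) < card J" by (rule psubset_card_mono[OF less.prems ps])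
    have fin: "finite (J - B)" using less.prems by simp
    obtain Ip where "Ip \<subseteq> J - B" "purified Q Ip" "MQ kl Q (J - B) = MQ kl Q Ip"
      using less.hyps[OF lt fin] by blast
    then show ?thesis using e by blast
  qed
qed

theorem lemma2p3:
  fixes arity kl :: "'r \<Rightarrow> nat" and cons :: "'r \<Rightarrow> bool"
    and Q :: "('r, 'x) atom set" and I :: "('r, 'v) fact set"
  assumes "wf_schema arity kl"
    and "sjf_bcq arity Q"
    and "wf_instance arity kl cons I"
  shows "\<exists>Ip. Ip \<subseteq> I \<and> purified Q Ip \<and> MQ kl Q I = MQ kl Q Ip \<and>
              (certain kl Q I \<longleftrightarrow> certain kl Q Ip)"
proof -
  have h: "inj_on fst Q" "finite I" using assms unfolding sjf_bcq_def wf_instance_def by auto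
  obtain Ip where ip: "Ip \<subseteq> I" "purified Q Ip" "MQ kl Q I = MQ kl Q Ip"
    using main[OF h(1) h(2), of kl] by blast
  have "certain kl Q I \<longleftrightarrow> certain kl Q Ip"
    unfolding certain_MQ ip(3) ..
  then show ?thesis using ip by blast
qed

end
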